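(* Let $(X,d)$ be a metric space, $p\in X$, and define $\mu_p(x,y)=d(x,y)+\sqrt{d(x,p)d(y,p)}$ for $x,y\in X$. Let $x,y,z\in X$. If $$\max\{\mu_p(x,z),\mu_p(y,z)\}\geq K\min\{\mu_p(x,z),\mu_p(y,z)\}$$ for some $K>3$, then $$\mu_p(x,z)+\mu_p(y,z)\leq \frac{3(K+3)}{2(K-3)}\,d(x,y).$$ *)

theory Defs
  imports "HOL-Analysis.Analysis"
begin

definition mu :: "'a::metric_space \<Rightarrow> 'a \<Rightarrow> 'a \<Rightarrow> real" where
  "mu p x y = dist x y + sqrt (dist x p * dist y p)"

end

theory Submission
  imports Defs
begin

lemma mu_ge: "max (dist y p) (dist z p) \<le> mu p y z"
proof -
  have t: "\<bar>dist y p - dist z p\<bar> \<le> dist y z"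
    by (smt (verit) dist_commute dist_triangle)
  have "min (dist y p) (dist z p) \<le> sqrt (dist y p * dist z p)"
  proof (cases "dist y p \<le> dist z p")
    case True
    have "dist y p = sqrt (dist y p * dist y p)" by simp
    also have "\<dots> \<le> sqrt (dist y p * dist z p)"
      by (rule real_sqrt_le_mono, rule mult_left_mono[OF True]) simp
    finally show ?thesis using True by (simp add: min_def)
  next
    case False
    have "dist z p = sqrt (dist z p * dist z p)" by simp
    also have "\<dots> \<le> sqrt (dist y p * dist z p)"
      using False by (intro real_sqrt_le_mono mult_right_mono) simp_all
    finally show ?thesis using False by (simp add: min_def)
  qed
  then show ?thesis using t unfolding mu_def by linarith
qed

lemma main_case:
  fixes p x y z :: "'a::metric_space" and K :: real
  assumes K: "K > 3" and h: "mu p x z \<ge> K * mu p y z"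
  shows "mu p x z + mu p y z \<le> 3 * (K + 3) / (2 * (K - 3)) * dist x y"
proof -
  define m where "m = mu p y z"
  define M where "M = mu p x z"
  define D where "D = dist x y"
  have m0: "m \<ge> 0" unfolding m_def mu_def by simp
  have D0: "D \<ge> 0" unfolding D_def by simp
  have bm: "dist y p \<le> m" and cm: "dist z p \<le> m" using mu_ge[of y p z] unfolding m_def by auto
  have tm: "dist y z \<le> m" unfolding m_def mu_def by simp
  have dxz: "dist x z \<le> D + dist y z" unfolding D_def by (rule dist_triangle)
  have a: "dist x p \<le> m + D" using bm dist_triangle[of x p y] unfolding D_def by linarith
  have "dist x p * dist z p \<le> (m + D) * m"
    using a cm by (simp add: mult_mono m0 D0)
  then have "sqrt (dist x p * dist z p) \<le> sqrt ((m + D) * m)" by simp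
  also have "sqrt ((m + D) * m) \<le> m + D / 2"
  proof -
    have "(m + D) * m \<le> (m + D/2)^2" by (simp add: power2_eq_square algebra_simps)
    then have "sqrt ((m + D) * m) \<le> sqrt ((m + D/2)^2)" by (rule real_sqrt_le_mono)
    also have "\<dots> = m + D/2" using m0 D0 by simp
    finally show ?thesis .
  qed
  finally have M: "M \<le> 3 * D / 2 + 2 * m" unfolding M_def mu_def using dxz tm by linarith
  have hK: "K * m \<le> M" using h unfolding m_def M_def by simp
  have "(K - 2) * m \<le> 3 * D / 2" using M hK by (simp add: algebra_simps)
  then have A: "(K - 3) * m \<le> 3 * D" using m0 D0 by (simp add: algebra_simps)
  have B: "2 * (K - 3) * (M + m) \<le> 2 * (K - 3) * (3 * D / 2 + 3 * m)"
    using M K by (intro mult_left_mono) simp_all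
  have "2 * (K - 3) * (3 * D / 2 + 3 * m) = 3 * (K - 3) * D + 6 * ((K - 3) * m)"
    by (simp add: algebra_simps)
  with A B have "2 * (K - 3) * (M + m) \<le> 3 * (K + 3) * D"
    by (simp add: algebra_simps)
  then have "M + m \<le> 3 * (K + 3) * D / (2 * (K - 3))"
    using K by (simp add: field_simps)
  then show ?thesis unfolding M_def m_def D_def by simp
qed

theorem lemma3p2:
  fixes p x y z :: "'a::metric_space" and K :: real
  assumes "K > 3"
    and "max (mu p x z) (mu p y z) \<ge> K * min (mu p x z) (mu p y z)"
  shows "mu p x z + mu p y z \<le> 3 * (K + 3) / (2 * (K - 3)) * dist x y"
proof (cases "mu p y z \<le> mu p x z")
  case True
  then have "mu p x z \<ge> K * mu p y z" using assms by simp
  then show ?thesis by (rule main_case[OF assms(1)])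
next
  case False
  then have "mu p y z \<ge> K * mu p x z" using assms by simp
  then have "mu p y z + mu p x z \<le> 3 * (K + 3) / (2 * (K - 3)) * dist y x"
    by (rule main_case[OF assms(1)])
  then show ?thesis by (simp add: dist_commute add.commute)
qed

end
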